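(* Let $(\bm M_s)$ and $(\tilde{\bm M}_s)$ be sequences of parameters with $\bm M_s,\tilde{\bm M}_s\in\mathcal M$ for all $s$. Then for every $t$, $$\max_{1\le i\le k_x}\big|g^x_i(\bm M_{t-H:t-1})-g^x_i(\tilde{\bm M}_{t-H:t-1})\big|\le L_g(H)\sum_{k=1}^H(1-\gamma)^{k-1}\|\bm M_{t-k}-\tilde{\bm M}_{t-k}\|_F,$$ $$\max_{1\le j\le k_u}\big|g^u_j(\bm M_{t-H:t})-g^u_j(\tilde{\bm M}_{t-H:t})\big|\le L_g(H)\sum_{k=0}^H(1-\gamma)^{\max(k-1,0)}\|\bm M_{t-k}-\tilde{\bm M}_{t-k}\|_F,$$ where $L_g(H)=\bar w\sqrt n\max(\|D_x\|_\infty,\|D_u\|_\infty)\kappa^3\kappa_B\sqrt H$.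
   Context: $A\in\mathbb R^{n\times n}$, $B\in\mathbb R^{n\times m}$, $\bar w>0$, $D_x\in\mathbb R^{k_x\times n}$, $D_u\in\mathbb R^{k_u\times m}$ with rows $D_{x,i}^\top$, $D_{u,j}^\top$; matrix $\|\cdot\|_\infty$ = max absolute row sum, $\|\cdot\|_2$ spectral norm, $\|\cdot\|_1$ vector 1-norm. For $\kappa\ge1$, $\gamma\in(0,1]$, $K$ is $(\kappa,\gamma)$-strongly stable if $A-BK=Q^{-1}LQ$ with $\|L\|_2\le1-\gamma$ and $\max(\|Q\|_2,\|Q^{-1}\|_2,\|K\|_2)\le\kappa$; $\kappa_B=\max(\|B\|_2,1)$. Fix $(\kappa,\gamma)$-strongly stable $\mathbb K$, $A_{\mathbb K}=A-B\mathbb K$, $H\ge1$. Parameters $\bm M=(M^{[1]},\dots,M^{[H]})$, $M^{[i]}\in\mathbb R^{m\times n}$, with $\|\bm M\|_F=(\sum_i\|M^{[i]}\|_F^2)^{1/2}$; $\mathcal M=\{\bm M:\|M^{[i]}\|_\infty\le2\sqrt n\kappa^3(1-\gamma)^{i-1}\}$. $\Phi^x_k(\bm M_{t-H:t-1})=A_{\mathbb K}^{k-1}\mathds1_{(k\le H)}+\sum_{i=1}^HA_{\mathbb K}^{i-1}BM_{t-i}^{[k-i]}\mathds1_{(1\le k-i\le H)}$, $\Phi^u_k(\bm M_{t-H:t})=M_t^{[k]}\mathds1_{(k\le H)}-\mathbb K\Phi^x_k(\bm M_{t-H:t-1})$ for $k=1,\dots,2H$. $g^x_i(\bm M_{t-H:t-1})=\bar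 w\sum_{k=1}^{2H}\|D_{x,i}^\top\Phi^x_k(\bm M_{t-H:t-1})\|_1$ and $g^u_j(\bm M_{t-H:t})=\bar w\sum_{k=1}^{2H}\|D_{u,j}^\top\Phi^u_k(\bm M_{t-H:t})\|_1$. *)

theory Defs
  imports "HOL-Analysis.Analysis"
begin

text \<open>Matrices are rendered as \<open>real^'c^'r\<close> (rows indexed by 'r, columns by 'c);
  dimensions n, m, k_x, k_u are the cardinalities of finite index types.\<close>

definition matpow :: "real^'n^'n \<Rightarrow> nat \<Rightarrow> real^'n^'n" where
  "matpow A k = (((**) A) ^^ k) (mat 1)"

definition specnorm :: "real^'c^'r \<Rightarrow> real" where
  "specnorm A = onorm (\<lambda>x. A *v x)"

definition inftynorm :: "real^'c^'r \<Rightarrow> real" where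
  "inftynorm A = Max (range (\<lambda>i. \<Sum>j\<in>UNIV. \<bar>A $ i $ j\<bar>))"

definition frobnorm :: "real^'c^'r \<Rightarrow> real" where
  "frobnorm A = sqrt (\<Sum>i\<in>UNIV. \<Sum>j\<in>UNIV. (A $ i $ j)^2)"

definition norm1 :: "real^'c \<Rightarrow> real" where
  "norm1 v = (\<Sum>j\<in>UNIV. \<bar>v $ j\<bar>)"

definition paramnorm :: "nat \<Rightarrow> (nat \<Rightarrow> real^'n^'m) \<Rightarrow> real" where
  "paramnorm H M = sqrt (\<Sum>i=1..H. (frobnorm (M i))^2)"

definition strongly_stable ::
  "real^'n^'n \<Rightarrow> real^'m^'n \<Rightarrow> real \<Rightarrow> real \<Rightarrow> real^'n^'m \<Rightarrow> bool" where
  "strongly_stable A B \<kappa> \<gamma> K \<longleftrightarrow>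
     (\<exists>Q L :: real^'n^'n. invertible Q \<and> A - B ** K = matrix_inv Q ** L ** Q \<and>
        specnorm L \<le> 1 - \<gamma> \<and> specnorm Q \<le> \<kappa> \<and> specnorm (matrix_inv Q) \<le> \<kappa> \<and>
        specnorm K \<le> \<kappa>)"

definition kappaB :: "real^'m^'n \<Rightarrow> real" where
  "kappaB B = max (specnorm B) 1"

definition paramset :: "nat \<Rightarrow> real \<Rightarrow> real \<Rightarrow> (nat \<Rightarrow> real^'n^'m) set" where
  "paramset H \<kappa> \<gamma> = {M. \<forall>i\<in>{1..H}.
     inftynorm (M i) \<le> 2 * sqrt (real CARD('n)) * \<kappa>^3 * (1 - \<gamma>)^(i-1)}"

text \<open>\<open>Phi_x A B K H Ms t k\<close> = \<open>\<Phi>^x_k(M_{t-H:t-1})\<close>, with \<open>A_K = A - B K\<close>;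
  \<open>Ms s i\<close> is \<open>M_s^{[i]}\<close>.\<close>
definition Phi_x :: "real^'n^'n \<Rightarrow> real^'m^'n \<Rightarrow> real^'n^'m \<Rightarrow> nat \<Rightarrow>
    (int \<Rightarrow> nat \<Rightarrow> real^'n^'m) \<Rightarrow> int \<Rightarrow> nat \<Rightarrow> real^'n^'n" where
  "Phi_x A B K H Ms t k =
     (if k \<le> H then matpow (A - B ** K) (k - 1) else 0) +
     (\<Sum>i=1..H. if 1 \<le> int k - int i \<and> int k - int i \<le> int H
                 then matpow (A - B ** K) (i - 1) ** B ** Ms (t - int i) (k - i) else 0)"

definition Phi_u :: "real^'n^'n \<Rightarrow> real^'m^'n \<Rightarrow> real^'n^'m \<Rightarrow> nat \<Rightarrow>
    (int \<Rightarrow> nat \<Rightarrow> real^'n^'m) \<Rightarrow> int \<Rightarrow> nat \<Rightarrow> real^'n^'m" where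
  "Phi_u A B K H Ms t k =
     (if k \<le> H then Ms t k else 0) - K ** Phi_x A B K H Ms t k"

text \<open>\<open>g^x_i\<close> and \<open>g^u_j\<close>; row \<open>D_{x,i}^T\<close> is \<open>Dx $ i\<close>.\<close>
definition g_x :: "real \<Rightarrow> real^'n^'kx \<Rightarrow> real^'n^'n \<Rightarrow> real^'m^'n \<Rightarrow> real^'n^'m \<Rightarrow> nat \<Rightarrow>
    (int \<Rightarrow> nat \<Rightarrow> real^'n^'m) \<Rightarrow> int \<Rightarrow> 'kx \<Rightarrow> real" where
  "g_x wbar Dx A B K H Ms t i =
     wbar * (\<Sum>k=1..2*H. norm1 ((Dx $ i) v* Phi_x A B K H Ms t k))"

definition g_u :: "real \<Rightarrow> real^'m^'ku \<Rightarrow> real^'n^'n \<Rightarrow> real^'m^'n \<Rightarrow> real^'n^'m \<Rightarrow> nat \<Rightarrow>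
    (int \<Rightarrow> nat \<Rightarrow> real^'n^'m) \<Rightarrow> int \<Rightarrow> 'ku \<Rightarrow> real" where
  "g_u wbar Du A B K H Ms t j =
     wbar * (\<Sum>k=1..2*H. norm1 ((Du $ j) v* Phi_u A B K H Ms t k))"

end

theory Submission
  imports Defs
begin


lemma specnorm_nonneg: "specnorm (X::real^'c^'r) \<ge> 0"
  unfolding specnorm_def by (rule onorm_pos_le) simp

lemma specnorm_apply: "norm (X *v x) \<le> specnorm (X::real^'c^'r) * norm x"
  unfolding specnorm_def by (rule onorm) simp

lemma specnorm_mult: "specnorm ((X::real^'c^'r) ** (Y::real^'d^'c)) \<le> specnorm X * specnorm Y"
proof -
  have "(\<lambda>x. (X ** Y) *v x) = (\<lambda>x. X *v x) o (\<lambda>x. Y *v x)"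
    by (auto simp: matrix_vector_mul_assoc)
  then show ?thesis unfolding specnorm_def
    by (metis onorm_compose matrix_vector_mul_bounded_linear)
qed

lemma specnorm_id: "specnorm (mat 1 :: real^'n^'n) \<le> 1"
proof -
  have "(\<lambda>x. (mat 1 :: real^'n^'n) *v x) = (\<lambda>x. x)" by simp
  then show ?thesis unfolding specnorm_def by (metis onorm_id_le)
qed

lemma sum_abs_le_sqrt_card: "(\<Sum>j\<in>UNIV. \<bar>(x::real^'c) $ j\<bar>) \<le> sqrt (real CARD('c)) * norm x"
proof -
  have "(\<Sum>j\<in>UNIV. \<bar>x $ j\<bar>) = inner (\<chi> j. \<bar>x $ j\<bar>) ((\<chi> j. 1) :: real^'c)"
    by (simp add: inner_vec_def)
  also have "\<dots> \<le> norm (\<chi> j. \<bar>x $ j\<bar>) * norm ((\<chi> j. (1::real)) :: real^'c)"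
    by (rule norm_cauchy_schwarz)
  also have "norm (\<chi> j. \<bar>x $ j\<bar>) = norm x"
    by (simp add: norm_vec_def)
  also have "norm ((\<chi> j. (1::real)) :: real^'c) = sqrt (real CARD('c))"
    by (simp add: norm_vec_def L2_set_constant)
  finally show ?thesis by (simp add: mult.commute)
qed

lemma row_norm_le: "norm ((X::real^'c^'r) $ l) \<le> specnorm X"
proof (cases "X $ l = 0")
  case True then show ?thesis by (simp add: specnorm_nonneg)
next
  case False
  have "norm (X $ l) ^ 2 = (X *v (X $ l)) $ l"
    by (simp add: matrix_mult_dot power2_norm_eq_inner)
  also have "\<dots> \<le> norm (X *v (X $ l))"
    by (metis abs_ge_self component_le_norm_cart order_trans)
  also have "\<dots> \<le> specnorm X * norm (X $ l)" by (rule specnorm_apply)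
  finally have "norm (X $ l) * norm (X $ l) \<le> specnorm X * norm (X $ l)"
    by (simp add: power2_eq_square)
  then show ?thesis using False by simp
qed

lemma norm1_vm: "norm1 ((d::real^'r) v* (X::real^'c^'r)) \<le> norm1 d * sqrt (real CARD('c)) * specnorm X"
proof -
  have "norm1 (d v* X) = (\<Sum>j\<in>UNIV. \<bar>\<Sum>l\<in>UNIV. d $ l * X $ l $ j\<bar>)"
    by (simp add: norm1_def vector_matrix_mult_def)
  also have "\<dots> \<le> (\<Sum>j\<in>UNIV. \<Sum>l\<in>UNIV. \<bar>d $ l\<bar> * \<bar>X $ l $ j\<bar>)"
    by (rule sum_mono, rule order_trans[OF sum_abs]) (simp add: abs_mult)
  also have "\<dots> = (\<Sum>l\<in>UNIV. \<bar>d $ l\<bar> * (\<Sum>j\<in>UNIV. \<bar>X $ l $ j\<bar>))"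
    by (subst sum.swap) (simp add: sum_distrib_left)
  also have "\<dots> \<le> (\<Sum>l\<in>UNIV. \<bar>d $ l\<bar> * (sqrt (real CARD('c)) * specnorm X))"
  proof (rule sum_mono)
    fix l
    have "(\<Sum>j\<in>UNIV. \<bar>X $ l $ j\<bar>) \<le> sqrt (real CARD('c)) * norm (X $ l)"
      by (rule sum_abs_le_sqrt_card)
    also have "\<dots> \<le> sqrt (real CARD('c)) * specnorm X"
      by (rule mult_left_mono[OF row_norm_le]) simp
    finally show "\<bar>d $ l\<bar> * (\<Sum>j\<in>UNIV. \<bar>X $ l $ j\<bar>) \<le> \<bar>d $ l\<bar> * (sqrt (real CARD('c)) * specnorm X)"
      by (rule mult_left_mono) simp
  qed
  also have "\<dots> = norm1 d * sqrt (real CARD('c)) * specnorm X"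
    by (simp add: norm1_def sum_distrib_right mult.assoc)
  finally show ?thesis .
qed

lemma norm_sq_cart: "norm (x::real^'c) ^ 2 = (\<Sum>j\<in>UNIV. (x $ j)^2)"
  unfolding norm_vec_def L2_set_def by (simp add: sum_nonneg)

lemma specnorm_le_frob: "specnorm (X::real^'c^'r) \<le> frobnorm X"
  unfolding specnorm_def
proof (rule onorm_le)
  fix x
  have "norm (X *v x) ^ 2 = (\<Sum>i\<in>UNIV. (inner (X $ i) x)^2)"
    by (simp add: norm_sq_cart matrix_mult_dot)
  also have "\<dots> \<le> (\<Sum>i\<in>UNIV. (norm (X $ i))^2 * (norm x)^2)"
    by (rule sum_mono) (use Cauchy_Schwarz_ineq in \<open>simp add: power2_norm_eq_inner\<close>)
  also have "\<dots> = (frobnorm X * norm x)^2"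
    by (simp add: frobnorm_def power_mult_distrib norm_sq_cart sum_distrib_right sum_nonneg)
  finally show "norm (X *v x) \<le> frobnorm X * norm x"
    by (rule power2_le_imp_le) (simp add: frobnorm_def sum_nonneg)
qed

lemma norm1_triangle: "norm1 (x + y) \<le> norm1 x + norm1 (y::real^'c)"
  unfolding norm1_def by (simp add: sum.distrib[symmetric] sum_mono abs_triangle_ineq)

lemma norm1_minus: "norm1 (x - y) \<le> norm1 x + norm1 (y::real^'c)"
  unfolding norm1_def by (simp add: sum.distrib[symmetric] sum_mono abs_triangle_ineq4)

lemma norm1_rev: "\<bar>norm1 x - norm1 (y::real^'c)\<bar> \<le> norm1 (x - y)"
proof -
  have 1: "(\<Sum>j\<in>UNIV. \<bar>x $ j\<bar>) - (\<Sum>j\<in>UNIV. \<bar>y $ j\<bar>) \<le> (\<Sum>j\<in>UNIV. \<bar>x $ j - y $ j\<bar>)"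
    unfolding sum_subtractf[symmetric] by (rule sum_mono) (rule abs_triangle_ineq2)
  have 2: "(\<Sum>j\<in>UNIV. \<bar>y $ j\<bar>) - (\<Sum>j\<in>UNIV. \<bar>x $ j\<bar>) \<le> (\<Sum>j\<in>UNIV. \<bar>x $ j - y $ j\<bar>)"
    unfolding sum_subtractf[symmetric] by (rule sum_mono) (metis abs_minus_commute abs_triangle_ineq2)
  show ?thesis using 1 2 unfolding norm1_def by simp
qed

lemma norm1_sum: "finite S \<Longrightarrow> norm1 (\<Sum>i\<in>S. f i) \<le> (\<Sum>i\<in>S. norm1 (f i::real^'c))"
proof (induction S rule: finite_induct)
  case (insert x F)
  then show ?case using norm1_triangle[of "f x" "\<Sum>i\<in>F. f i"] by simp
qed (simp add: norm1_def)


lemma norm1_zero [simp]: "norm1 0 = 0"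
  by (simp add: norm1_def)

lemma matrix_sub_ldistrib': "(A::real^'b^'a) ** (B - C) = A ** B - A ** (C::real^'c^'b)"
proof -
  have "A ** (B - C) + A ** C = A ** B" by (metis matrix_add_ldistrib diff_add_cancel)
  then show ?thesis by (simp add: eq_diff_eq)
qed

lemma mm_sum: "finite S \<Longrightarrow> (X::real^'b^'a) ** (\<Sum>i\<in>S. f i) = (\<Sum>i\<in>S. X ** (f i::real^'c^'b))"
  by (induction S rule: finite_induct) (auto simp: matrix_add_ldistrib)

lemma vm_sum: "finite S \<Longrightarrow> (d::real^'a) v* (\<Sum>i\<in>S. f i) = (\<Sum>i\<in>S. d v* (f i::real^'c^'a))"
  by (induction S rule: finite_induct) (auto simp: vector_matrix_mult_add_rdistrib)

lemma matpow_Suc: "matpow A (Suc k) = A ** matpow A k"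
  by (simp add: matpow_def)

lemma matpow_0: "matpow A 0 = mat 1"
  by (simp add: matpow_def)

lemma matpow_conj:
  assumes "Q ** Qi = mat 1" "Qi ** Q = mat 1" "A = Qi ** L ** Q"
  shows "matpow (A::real^'n^'n) k = Qi ** matpow L k ** Q"
proof (induction k)
  case 0 then show ?case using assms by (simp add: matpow_0)
next
  case (Suc k)
  have "matpow A (Suc k) = (Qi ** L ** Q) ** (Qi ** matpow L k ** Q)"
    using Suc assms by (simp add: matpow_Suc)
  also have "\<dots> = Qi ** L ** (Q ** Qi) ** matpow L k ** Q"
    by (simp add: matrix_mul_assoc)
  also have "\<dots> = Qi ** matpow L (Suc k) ** Q"
    using assms by (simp add: matrix_mul_assoc matpow_Suc)
  finally show ?case .
qed

lemma specnorm_matpow: "specnorm (matpow (L::real^'n^'n) k) \<le> specnorm L ^ k"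
proof (induction k)
  case 0 then show ?case by (simp add: matpow_0 specnorm_id)
next
  case (Suc k)
  have "specnorm (matpow L (Suc k)) \<le> specnorm L * specnorm (matpow L k)"
    by (simp add: matpow_Suc specnorm_mult)
  also have "\<dots> \<le> specnorm L * specnorm L ^ k"
    by (rule mult_left_mono[OF Suc specnorm_nonneg])
  finally show ?case by simp
qed

lemma reindex_conv:
  fixes F :: "nat \<Rightarrow> nat \<Rightarrow> real"
  shows "(\<Sum>k=1..2*H. \<Sum>i=1..H. if 1 \<le> int k - int i \<and> int k - int i \<le> int H then F i (k - i) else 0)
       = (\<Sum>i=1..H. \<Sum>j=1..H. F i j)"
proof -
  have "(\<Sum>k=1..2*H. \<Sum>i=1..H. if 1 \<le> int k - int i \<and> int k - int i \<le> int H then F i (k - i) else 0)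
      = (\<Sum>i=1..H. \<Sum>k=1..2*H. if 1 \<le> int k - int i \<and> int k - int i \<le> int H then F i (k - i) else 0)"
    by (rule sum.swap)
  also have "\<dots> = (\<Sum>i=1..H. \<Sum>j=1..H. F i j)"
  proof (rule sum.cong[OF refl])
    fix i assume i: "i \<in> {1..H}"
    have "(\<Sum>k=1..2*H. if 1 \<le> int k - int i \<and> int k - int i \<le> int H then F i (k - i) else 0)
        = (\<Sum>k\<in>{k\<in>{1..2*H}. 1 \<le> int k - int i \<and> int k - int i \<le> int H}. F i (k - i))"
      by (rule sum.inter_filter[symmetric]) simp
    also have "{k\<in>{1..2*H}. 1 \<le> int k - int i \<and> int k - int i \<le> int H} = (\<lambda>j. j + i) ` {1..H}"
    proof (rule set_eqI, rule iffI)
      fix k assume "k \<in> {k\<in>{1..2*H}. 1 \<le> int k - int i \<and> int k - int i \<le> int H}"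
      then have "k - i \<in> {1..H}" "k = (k - i) + i" by auto
      then show "k \<in> (\<lambda>j. j + i) ` {1..H}" by blast
    next
      fix k assume "k \<in> (\<lambda>j. j + i) ` {1..H}"
      then show "k \<in> {k\<in>{1..2*H}. 1 \<le> int k - int i \<and> int k - int i \<le> int H}" using i by auto
    qed
    also have "(\<Sum>k\<in>(\<lambda>j. j + i) ` {1..H}. F i (k - i)) = (\<Sum>j=1..H. F i j)"
      by (subst sum.reindex) (auto simp: inj_on_def)
    finally show "(\<Sum>k=1..2*H. if 1 \<le> int k - int i \<and> int k - int i \<le> int H then F i (k - i) else 0)
        = (\<Sum>j=1..H. F i j)" .
  qed
  finally show ?thesis .
qed

lemma sum_le_sqrt_paramnorm:
  "(\<Sum>j=1..H. frobnorm (E j)) \<le> sqrt (real H) * paramnorm H E"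
proof -
  have "(\<Sum>j=1..H. frobnorm (E j) * 1)\<^sup>2 \<le> (\<Sum>j=1..H. (frobnorm (E j))\<^sup>2) * (\<Sum>j=1..H. (1::real)\<^sup>2)"
    by (rule Cauchy_Schwarz_ineq_sum)
  then have "(\<Sum>j=1..H. frobnorm (E j)) \<le> sqrt ((\<Sum>j=1..H. (frobnorm (E j))\<^sup>2) * real H)"
    by (intro real_le_rsqrt) simp
  then show ?thesis by (simp add: paramnorm_def real_sqrt_mult mult.commute)
qed

lemma conv_bound:
  fixes d :: "real^'r" and T :: "nat \<Rightarrow> nat \<Rightarrow> real^'c^'r" and E :: "nat \<Rightarrow> nat \<Rightarrow> real^'a^'b"
  assumes T: "\<And>i j. norm1 (d v* T i j) \<le> b i * frobnorm (E i j)" and b: "\<And>i. b i \<ge> 0"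
  shows "(\<Sum>k=1..2*H. norm1 (d v* (\<Sum>i=1..H. if 1 \<le> int k - int i \<and> int k - int i \<le> int H then T i (k - i) else 0)))
     \<le> (\<Sum>i=1..H. b i * (sqrt (real H) * paramnorm H (E i)))"
proof -
  have "(\<Sum>k=1..2*H. norm1 (d v* (\<Sum>i=1..H. if 1 \<le> int k - int i \<and> int k - int i \<le> int H then T i (k - i) else 0)))
     \<le> (\<Sum>k=1..2*H. \<Sum>i=1..H. if 1 \<le> int k - int i \<and> int k - int i \<le> int H then b i * frobnorm (E i (k - i)) else 0)"
  proof (rule sum_mono)
    fix k
    have "norm1 (d v* (\<Sum>i=1..H. if 1 \<le> int k - int i \<and> int k - int i \<le> int H then T i (k - i) else 0))
        \<le> (\<Sum>i=1..H. norm1 (d v* (if 1 \<le> int k - int i \<and> int k - int i \<le> int H then T i (k - i) else 0)))"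
      by (simp only: vm_sum[OF finite_atLeastAtMost] norm1_sum[OF finite_atLeastAtMost])
    also have "\<dots> \<le> (\<Sum>i=1..H. if 1 \<le> int k - int i \<and> int k - int i \<le> int H then b i * frobnorm (E i (k - i)) else 0)"
      by (rule sum_mono) (auto simp: T)
    finally show "norm1 (d v* (\<Sum>i=1..H. if 1 \<le> int k - int i \<and> int k - int i \<le> int H then T i (k - i) else 0))
        \<le> (\<Sum>i=1..H. if 1 \<le> int k - int i \<and> int k - int i \<le> int H then b i * frobnorm (E i (k - i)) else 0)" .
  qed
  also have "\<dots> = (\<Sum>i=1..H. \<Sum>j=1..H. b i * frobnorm (E i j))"
    by (rule reindex_conv)
  also have "\<dots> = (\<Sum>i=1..H. b i * (\<Sum>j=1..H. frobnorm (E i j)))"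
    by (simp add: sum_distrib_left)
  also have "\<dots> \<le> (\<Sum>i=1..H. b i * (sqrt (real H) * paramnorm H (E i)))"
    by (rule sum_mono, rule mult_left_mono[OF sum_le_sqrt_paramnorm b])
  finally show ?thesis .
qed



theorem lemma16:
  fixes A :: "real^'n^'n" and B :: "real^'m^'n" and K :: "real^'n^'m"
    and Dx :: "real^'n^'kx" and Du :: "real^'m^'ku"
    and wbar \<kappa> \<gamma> :: real and H :: nat
    and Ms Mt :: "int \<Rightarrow> nat \<Rightarrow> real^'n^'m"
  assumes "wbar > 0" and "\<kappa> \<ge> 1" and "0 < \<gamma>" and "\<gamma> \<le> 1"
    and "strongly_stable A B \<kappa> \<gamma> K"
    and "H \<ge> 1"
    and "\<And>s. Ms s \<in> paramset H \<kappa> \<gamma>"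
    and "\<And>s. Mt s \<in> paramset H \<kappa> \<gamma>"
  defines "Lg \<equiv> wbar * sqrt (real CARD('n)) * max (inftynorm Dx) (inftynorm Du)
                 * \<kappa>^3 * kappaB B * sqrt (real H)"
  shows "\<forall>t. (\<forall>i. \<bar>g_x wbar Dx A B K H Ms t i - g_x wbar Dx A B K H Mt t i\<bar>
              \<le> Lg * (\<Sum>k=1..H. (1 - \<gamma>)^(k-1) * paramnorm H (\<lambda>l. Ms (t - int k) l - Mt (t - int k) l)))
          \<and> (\<forall>j. \<bar>g_u wbar Du A B K H Ms t j - g_u wbar Du A B K H Mt t j\<bar>
              \<le> Lg * (\<Sum>k=0..H. (1 - \<gamma>)^(nat (max (int k - 1) 0)) * paramnorm H (\<lambda>l. Ms (t - int k) l - Mt (t - int k) l)))"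
proof -
  let ?AK = "A - B ** K"
  define D where "D s l = Ms s l - Mt s l" for s l
  define P where "P i = matpow ?AK (i - 1) ** B" for i
  define sn where "sn = sqrt (real CARD('n))"
  define c where "c i = \<kappa>^2 * (1-\<gamma>)^(i-1) * kappaB B" for i :: nat
  define sH where "sH = sqrt (real H)"
  define pn where "pn s = paramnorm H (\<lambda>l. Ms s l - Mt s l)" for s
  define mx where "mx = max (inftynorm Dx) (inftynorm Du)"
  have pnD: "paramnorm H (D s) = pn s" for s by (simp add: pn_def D_def[abs_def])
  from assms(5) obtain Q L :: "real^'n^'n" where Qinv: "invertible Q"
    and AK: "?AK = matrix_inv Q ** L ** Q" and Lb: "specnorm L \<le> 1-\<gamma>"
    and Qb: "specnorm Q \<le> \<kappa>" and Qib: "specnorm (matrix_inv Q) \<le> \<kappa>" and Kb: "specnorm K \<le> \<kappa>"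
    unfolding strongly_stable_def by blast
  have QQ: "Q ** matrix_inv Q = mat 1 \<and> matrix_inv Q ** Q = mat 1"
    using Qinv unfolding invertible_def matrix_inv_def by (rule someI_ex)
  have g0: "0 \<le> 1-\<gamma>" using assms by simp
  have k0: "0 \<le> \<kappa>" using assms by simp
  have kB1: "kappaB B \<ge> 1" by (simp add: kappaB_def)
  have sB: "specnorm B \<le> kappaB B" by (simp add: kappaB_def)
  have powb: "specnorm (matpow ?AK j) \<le> \<kappa>^2 * (1-\<gamma>)^j" for j
  proof -
    have "matpow ?AK j = matrix_inv Q ** matpow L j ** Q"
      using matpow_conj[OF QQ[THEN conjunct1] QQ[THEN conjunct2] AK] .
    then have "specnorm (matpow ?AK j) \<le> specnorm (matrix_inv Q ** matpow L j) * specnorm Q"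
      by (simp add: specnorm_mult)
    also have "\<dots> \<le> (specnorm (matrix_inv Q) * specnorm (matpow L j)) * specnorm Q"
      by (rule mult_right_mono[OF specnorm_mult specnorm_nonneg])
    also have "specnorm (matpow L j) \<le> (1-\<gamma>)^j"
      by (rule order_trans[OF specnorm_matpow power_mono[OF Lb specnorm_nonneg]])
    then have "specnorm (matrix_inv Q) * specnorm (matpow L j) \<le> \<kappa> * (1-\<gamma>)^j"
      by (rule mult_mono[OF Qib _ k0 specnorm_nonneg])
    then have "(specnorm (matrix_inv Q) * specnorm (matpow L j)) * specnorm Q \<le> (\<kappa> * (1-\<gamma>)^j) * \<kappa>"
      by (rule mult_mono[OF _ Qb _ specnorm_nonneg]) (intro mult_nonneg_nonneg zero_le_power k0 g0)
    finally show ?thesis by (simp add: power2_eq_square mult_ac)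
  qed
  have cnn: "0 \<le> c i" for i unfolding c_def using kB1 by (intro mult_nonneg_nonneg zero_le_power k0 g0) auto
  have Pb: "specnorm (P i ** X) \<le> c i * frobnorm X" for i X
  proof -
    have "specnorm (P i ** X) \<le> specnorm (P i) * specnorm X" by (rule specnorm_mult)
    also have "specnorm (P i) \<le> specnorm (matpow ?AK (i-1)) * specnorm B"
      unfolding P_def by (rule specnorm_mult)
    also have "\<dots> \<le> (\<kappa>^2 * (1-\<gamma>)^(i-1)) * kappaB B"
      by (rule mult_mono[OF powb sB _ specnorm_nonneg]) (intro mult_nonneg_nonneg zero_le_power k0 g0)
    finally have "specnorm (P i ** X) \<le> c i * specnorm X"
      unfolding c_def by (simp add: mult_right_mono specnorm_nonneg)
    also have "\<dots> \<le> c i * frobnorm X" by (rule mult_left_mono[OF specnorm_le_frob cnn])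
    finally show ?thesis .
  qed
  have KPb: "specnorm (K ** (P i ** X)) \<le> \<kappa> * (c i * frobnorm X)" for i X
    by (rule order_trans[OF specnorm_mult mult_mono[OF Kb Pb k0 specnorm_nonneg]])
  have phix: "Phi_x A B K H Ms t k - Phi_x A B K H Mt t k
     = (\<Sum>i=1..H. if 1 \<le> int k - int i \<and> int k - int i \<le> int H then P i ** D (t - int i) (k - i) else 0)" for t k
    unfolding Phi_x_def P_def D_def
    by (simp add: sum_subtractf[symmetric]) (intro sum.cong refl, simp add: matrix_sub_ldistrib')
  have pnn: "0 \<le> pn s" for s by (simp add: pn_def paramnorm_def sum_nonneg)
  have dx: "norm1 (Dx $ i) \<le> mx" for i
  proof -
    have "norm1 (Dx $ i) \<le> inftynorm Dx"
      unfolding inftynorm_def norm1_def by (rule Max_ge) auto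
    then show ?thesis unfolding mx_def by simp
  qed
  have du: "norm1 (Du $ i) \<le> mx" for i
  proof -
    have "norm1 (Du $ i) \<le> inftynorm Du"
      unfolding inftynorm_def norm1_def by (rule Max_ge) auto
    then show ?thesis unfolding mx_def by simp
  qed
  have k23: "\<kappa>^2 \<le> \<kappa>^3" using assms by (simp add: power_increasing)
  have cmp: "wbar * ((\<delta> * sn * (\<kappa>^e * c i)) * (sH * pn s)) \<le> Lg * ((1-\<gamma>)^(i-1) * pn s)"
    if "\<delta> \<le> mx" "0 \<le> \<delta>" "\<kappa>^e * \<kappa>^2 \<le> \<kappa>^3" for \<delta> e i s
  proof -
    have F: "0 \<le> wbar * sn * kappaB B * sH * (1-\<gamma>)^(i-1) * pn s"
      by (intro mult_nonneg_nonneg zero_le_power g0 pnn) (use assms kB1 in \<open>auto simp: sn_def sH_def\<close>)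
    have "\<delta> * (\<kappa>^e * \<kappa>^2) \<le> mx * \<kappa>^3"
      by (rule mult_mono) (use that k0 in auto)
    then have "(\<delta> * (\<kappa>^e * \<kappa>^2)) * (wbar * sn * kappaB B * sH * (1-\<gamma>)^(i-1) * pn s)
        \<le> (mx * \<kappa>^3) * (wbar * sn * kappaB B * sH * (1-\<gamma>)^(i-1) * pn s)"
      by (rule mult_right_mono[OF _ F])
    then show ?thesis by (simp add: Lg_def c_def sn_def sH_def mx_def mult_ac)
  qed
  show ?thesis
  proof (intro allI conjI)
    fix t i
    let ?d = "Dx $ i"
    have "\<bar>g_x wbar Dx A B K H Ms t i - g_x wbar Dx A B K H Mt t i\<bar>
       = wbar * \<bar>\<Sum>k=1..2*H. norm1 (?d v* Phi_x A B K H Ms t k) - norm1 (?d v* Phi_x A B K H Mt t k)\<bar>"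
      using assms(1) by (simp add: g_x_def sum_subtractf right_diff_distrib[symmetric] abs_mult)
    also have "\<dots> \<le> wbar * (\<Sum>k=1..2*H. norm1 (?d v* (Phi_x A B K H Ms t k - Phi_x A B K H Mt t k)))"
      using assms(1)
      by (intro mult_left_mono order_trans[OF sum_abs] sum_mono)
         (auto simp: vector_matrix_mult_diff_rdistrib norm1_rev)
    also have "\<dots> \<le> wbar * (\<Sum>i'=1..H. (norm1 ?d * sn * (\<kappa>^0 * c i')) * (sH * pn (t - int i')))"
    proof (rule mult_left_mono)
      show "0 \<le> wbar" using assms by simp
      have "(\<Sum>k=1..2*H. norm1 (?d v* (Phi_x A B K H Ms t k - Phi_x A B K H Mt t k)))
        \<le> (\<Sum>i'=1..H. (norm1 ?d * sn * c i') * (sqrt (real H) * paramnorm H (D (t - int i'))))"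
        unfolding phix
      proof (rule conv_bound)
        fix i' j
        show "norm1 (?d v* (P i' ** D (t - int i') j)) \<le> norm1 ?d * sn * c i' * frobnorm (D (t - int i') j)"
        proof -
          have "norm1 (?d v* (P i' ** D (t - int i') j)) \<le> norm1 ?d * sn * specnorm (P i' ** D (t - int i') j)"
            unfolding sn_def by (rule norm1_vm)
          also have "\<dots> \<le> norm1 ?d * sn * (c i' * frobnorm (D (t - int i') j))"
            by (rule mult_left_mono[OF Pb]) (simp add: sn_def norm1_def sum_nonneg)
          finally show ?thesis by (simp add: mult_ac)
        qed
      next
        fix i' show "0 \<le> norm1 ?d * sn * c i'" using cnn by (simp add: sn_def norm1_def sum_nonneg)
      qed
      then show "(\<Sum>k=1..2*H. norm1 (?d v* (Phi_x A B K H Ms t k - Phi_x A B K H Mt t k)))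
        \<le> (\<Sum>i'=1..H. (norm1 ?d * sn * (\<kappa>^0 * c i')) * (sH * pn (t - int i')))"
        by (simp add: pnD sH_def)
    qed
    also have "\<dots> = (\<Sum>i'=1..H. wbar * ((norm1 ?d * sn * (\<kappa>^0 * c i')) * (sH * pn (t - int i'))))"
      by (simp add: sum_distrib_left)
    also have "\<dots> \<le> (\<Sum>i'=1..H. Lg * ((1-\<gamma>)^(i'-1) * pn (t - int i')))"
      by (rule sum_mono, rule cmp) (use dx k23 in \<open>auto simp: norm1_def sum_nonneg\<close>)
    also have "\<dots> = Lg * (\<Sum>k=1..H. (1 - \<gamma>)^(k-1) * paramnorm H (\<lambda>l. Ms (t - int k) l - Mt (t - int k) l))"
      by (simp add: sum_distrib_left pn_def)
    finally show "\<bar>g_x wbar Dx A B K H Ms t i - g_x wbar Dx A B K H Mt t i\<bar>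
       \<le> Lg * (\<Sum>k=1..H. (1 - \<gamma>)^(k-1) * paramnorm H (\<lambda>l. Ms (t - int k) l - Mt (t - int k) l))" .
  next
    fix t j
    let ?d = "Du $ j"
    let ?c = "\<lambda>k i. 1 \<le> int k - int i \<and> int k - int i \<le> int H"
    have phiu: "Phi_u A B K H Ms t k - Phi_u A B K H Mt t k = (if k \<le> H then D t k else 0)
       - (\<Sum>i=1..H. if ?c k i then K ** (P i ** D (t - int i) (k - i)) else 0)" for k
    proof -
      have "Phi_u A B K H Ms t k - Phi_u A B K H Mt t k = (if k \<le> H then D t k else 0)
         - K ** (Phi_x A B K H Ms t k - Phi_x A B K H Mt t k)"
        unfolding Phi_u_def D_def by (cases "k \<le> H") (simp_all add: matrix_sub_ldistrib' algebra_simps)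
      also have "K ** (Phi_x A B K H Ms t k - Phi_x A B K H Mt t k)
         = (\<Sum>i=1..H. if ?c k i then K ** (P i ** D (t - int i) (k - i)) else 0)"
        unfolding phix by (simp add: mm_sum) (intro sum.cong refl, simp)
      finally show ?thesis .
    qed
    have dnn: "0 \<le> norm1 ?d" by (simp add: norm1_def sum_nonneg)
    have "\<bar>g_u wbar Du A B K H Ms t j - g_u wbar Du A B K H Mt t j\<bar>
       = wbar * \<bar>\<Sum>k=1..2*H. norm1 (?d v* Phi_u A B K H Ms t k) - norm1 (?d v* Phi_u A B K H Mt t k)\<bar>"
      using assms(1) by (simp add: g_u_def sum_subtractf right_diff_distrib[symmetric] abs_mult)
    also have "\<dots> \<le> wbar * (\<Sum>k=1..2*H. norm1 (?d v* (Phi_u A B K H Ms t k - Phi_u A B K H Mt t k)))"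
      using assms(1)
      by (intro mult_left_mono order_trans[OF sum_abs] sum_mono)
         (auto simp: vector_matrix_mult_diff_rdistrib norm1_rev)
    also have "\<dots> \<le> wbar * ((\<Sum>k=1..2*H. norm1 (?d v* (if k \<le> H then D t k else 0)))
        + (\<Sum>k=1..2*H. norm1 (?d v* (\<Sum>i=1..H. if ?c k i then K ** (P i ** D (t - int i) (k - i)) else 0))))"
      using assms(1) unfolding sum.distrib[symmetric]
      by (intro mult_left_mono sum_mono) (auto simp: phiu vector_matrix_mult_diff_rdistrib norm1_minus)
    also have "\<dots> \<le> wbar * (norm1 ?d * sn * (sH * pn t)
        + (\<Sum>i'=1..H. (norm1 ?d * sn * (\<kappa>^1 * c i')) * (sH * pn (t - int i'))))"
    proof (intro mult_left_mono add_mono)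
      show "0 \<le> wbar" using assms by simp
      have "(\<Sum>k=1..2*H. norm1 (?d v* (if k \<le> H then D t k else 0)))
          = (\<Sum>k=1..2*H. if k \<le> H then norm1 (?d v* D t k) else 0)"
        by (intro sum.cong) auto
      also have "\<dots> = (\<Sum>k\<in>{k\<in>{1..2*H}. k \<le> H}. norm1 (?d v* D t k))"
        by (rule sum.inter_filter[symmetric]) simp
      also have "{k\<in>{1..2*H}. k \<le> H} = {1..H}" by auto
      also have "(\<Sum>k=1..H. norm1 (?d v* D t k)) \<le> (\<Sum>k=1..H. norm1 ?d * sn * frobnorm (D t k))"
      proof (rule sum_mono)
        fix k
        have "norm1 (?d v* D t k) \<le> norm1 ?d * sn * specnorm (D t k)"
          unfolding sn_def by (rule norm1_vm)
        also have "\<dots> \<le> norm1 ?d * sn * frobnorm (D t k)"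
          by (rule mult_left_mono[OF specnorm_le_frob]) (simp add: sn_def dnn)
        finally show "norm1 (?d v* D t k) \<le> norm1 ?d * sn * frobnorm (D t k)" .
      qed
      also have "\<dots> = norm1 ?d * sn * (\<Sum>k=1..H. frobnorm (D t k))"
        by (simp add: sum_distrib_left)
      also have "\<dots> \<le> norm1 ?d * sn * (sH * pn t)"
        using sum_le_sqrt_paramnorm[where H=H and E="D t"]
        by (intro mult_left_mono) (simp_all add: pnD sH_def sn_def dnn)
      finally show "(\<Sum>k=1..2*H. norm1 (?d v* (if k \<le> H then D t k else 0))) \<le> norm1 ?d * sn * (sH * pn t)" .
      have "(\<Sum>k=1..2*H. norm1 (?d v* (\<Sum>i=1..H. if ?c k i then K ** (P i ** D (t - int i) (k - i)) else 0)))
        \<le> (\<Sum>i'=1..H. (norm1 ?d * sn * (\<kappa> * c i')) * (sqrt (real H) * paramnorm H (D (t - int i'))))"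
      proof (rule conv_bound)
        fix i' j
        show "norm1 (?d v* (K ** (P i' ** D (t - int i') j))) \<le> norm1 ?d * sn * (\<kappa> * c i') * frobnorm (D (t - int i') j)"
        proof -
          have "norm1 (?d v* (K ** (P i' ** D (t - int i') j))) \<le> norm1 ?d * sn * specnorm (K ** (P i' ** D (t - int i') j))"
            unfolding sn_def by (rule norm1_vm)
          also have "\<dots> \<le> norm1 ?d * sn * (\<kappa> * (c i' * frobnorm (D (t - int i') j)))"
            by (rule mult_left_mono[OF KPb]) (simp add: sn_def dnn)
          finally show ?thesis by (simp add: mult_ac)
        qed
      next
        fix i' show "0 \<le> norm1 ?d * sn * (\<kappa> * c i')" using cnn k0 dnn by (simp add: sn_def)
      qed
      then show "(\<Sum>k=1..2*H. norm1 (?d v* (\<Sum>i=1..H. if ?c k i then K ** (P i ** D (t - int i) (k - i)) else 0)))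
        \<le> (\<Sum>i'=1..H. (norm1 ?d * sn * (\<kappa>^1 * c i')) * (sH * pn (t - int i')))"
        by (simp add: pnD sH_def)
    qed
    also have "\<dots> = wbar * (norm1 ?d * sn * (sH * pn t))
        + (\<Sum>i'=1..H. wbar * ((norm1 ?d * sn * (\<kappa>^1 * c i')) * (sH * pn (t - int i'))))"
      by (simp add: sum_distrib_left distrib_left)
    also have "\<dots> \<le> Lg * pn t + (\<Sum>i'=1..H. Lg * ((1-\<gamma>)^(i'-1) * pn (t - int i')))"
    proof (rule add_mono)
      have F: "0 \<le> wbar * sn * sH * pn t"
        by (intro mult_nonneg_nonneg pnn) (use assms in \<open>auto simp: sn_def sH_def\<close>)
      have k3: "1 \<le> \<kappa>^3" using assms(2) by (simp add: one_le_power)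
      have "1 * 1 \<le> \<kappa>^3 * kappaB B"
        by (rule mult_mono[OF k3 kB1]) (use k3 k0 in auto)
      then have k3B: "1 \<le> \<kappa>^3 * kappaB B" by simp
      have "norm1 ?d * 1 \<le> mx * (\<kappa>^3 * kappaB B)"
        by (rule mult_mono[OF du k3B]) (use du[of j] dnn in auto)
      then have "(norm1 ?d * 1) * (wbar * sn * sH * pn t) \<le> (mx * (\<kappa>^3 * kappaB B)) * (wbar * sn * sH * pn t)"
        by (rule mult_right_mono[OF _ F])
      then show "wbar * (norm1 ?d * sn * (sH * pn t)) \<le> Lg * pn t"
        by (simp add: Lg_def sn_def sH_def mx_def mult_ac)
      show "(\<Sum>i'=1..H. wbar * ((norm1 ?d * sn * (\<kappa>^1 * c i')) * (sH * pn (t - int i'))))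
          \<le> (\<Sum>i'=1..H. Lg * ((1-\<gamma>)^(i'-1) * pn (t - int i')))"
        by (rule sum_mono, rule cmp) (use du dnn in \<open>auto simp: power_numeral_reduce\<close>)
    qed
    also have "\<dots> = Lg * (\<Sum>k=0..H. (1 - \<gamma>)^(nat (max (int k - 1) 0)) * paramnorm H (\<lambda>l. Ms (t - int k) l - Mt (t - int k) l))"
    proof -
      have "(\<Sum>k=0..H. (1 - \<gamma>)^(nat (max (int k - 1) 0)) * paramnorm H (\<lambda>l. Ms (t - int k) l - Mt (t - int k) l))
          = pn t + (\<Sum>k=Suc 0..H. (1 - \<gamma>)^(nat (max (int k - 1) 0)) * pn (t - int k))"
        using sum.atLeast_Suc_atMost[of 0 H "\<lambda>k. (1 - \<gamma>)^(nat (max (int k - 1) 0)) * pn (t - int k)"]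
        by (simp add: pn_def)
      also have "(\<Sum>k=Suc 0..H. (1 - \<gamma>)^(nat (max (int k - 1) 0)) * pn (t - int k))
          = (\<Sum>k=1..H. (1 - \<gamma>)^(k-1) * pn (t - int k))"
      proof (rule sum.cong)
        show "{Suc 0..H} = {1..H}" by simp
      next
        fix k assume "k \<in> {1..H}"
        then have "nat (max (int k - 1) 0) = k - 1" by auto
        then show "(1 - \<gamma>)^(nat (max (int k - 1) 0)) * pn (t - int k) = (1 - \<gamma>)^(k-1) * pn (t - int k)" by simp
      qed
      finally show ?thesis by (simp add: distrib_left sum_distrib_left)
    qed
    finally show "\<bar>g_u wbar Du A B K H Ms t j - g_u wbar Du A B K H Mt t j\<bar>
              \<le> Lg * (\<Sum>k=0..H. (1 - \<gamma>)^(nat (max (int k - 1) 0)) * paramnorm H (\<lambda>l. Ms (t - int k) l - Mt (t - int k) l))" .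
  qed
qed

end
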